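(* Let $\Omega=\{\rho<0\}\subset\mathbb{C}^n$ be a bounded strongly convex domain with $C^3$ defining function $\rho$ and with $0\in\Omega$. There is $R=R(\Omega)>1$ such that for every $\xi\in\Omega_\varepsilon\setminus\Omega$ and every $z\in\Omega$, the number $\lambda=\frac{\langle\partial\rho(\xi),z\rangle}{\langle\partial\rho(\xi),\xi\rangle}$ lies in the domain $L(t)$ bounded by the bigger arc of the circle $|\lambda|=R$ and the chord $\{\lambda\in\mathbb{C}:\lambda=1+e^{it}s,\ s\in\mathbb{R},\ |\lambda|\le R\}$, where $t=\frac{\pi}{2}-\arg\langle\partial\rho(\xi),\xi\rangle$.
   Context: $\langle\partial\rho(\xi),w\rangle=\sum_k\frac{\partial\rho}{\partial\xi_k}(\xi)w_k$; $\varepsilon>0$ is fixed small so that $d^2\rho$ is positive definite on $\{|\rho|\le\varepsilon\}$, and $\Omega_\varepsilon=\{\rho<\varepsilon\}$. *)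

theory Defs
  imports "HOL-Analysis.Analysis"
begin

text \<open>Points of C^n are modelled as complex^'n; rho : C^n -> R is regarded as a
function of the 2n real variables (real Frechet derivatives).\<close>

definition D1 :: "(complex^'n \<Rightarrow> real) \<Rightarrow> complex^'n \<Rightarrow> complex^'n \<Rightarrow> real" where
  "D1 \<rho> x v = frechet_derivative \<rho> (at x) v"

definition D2 :: "(complex^'n \<Rightarrow> real) \<Rightarrow> complex^'n \<Rightarrow> complex^'n \<Rightarrow> complex^'n \<Rightarrow> real" where
  "D2 \<rho> x v w = frechet_derivative (\<lambda>y. D1 \<rho> y v) (at x) w"

definition D3 :: "(complex^'n \<Rightarrow> real) \<Rightarrow> complex^'n \<Rightarrow> complex^'n \<Rightarrow> complex^'n \<Rightarrow> complex^'n \<Rightarrow> real" where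
  "D3 \<rho> x v w u = frechet_derivative (\<lambda>y. D2 \<rho> y v w) (at x) u"

definition C3 :: "(complex^'n \<Rightarrow> real) \<Rightarrow> bool" where
  "C3 \<rho> \<longleftrightarrow> (\<forall>x. \<rho> differentiable (at x))
     \<and> (\<forall>v x. (\<lambda>y. D1 \<rho> y v) differentiable (at x))
     \<and> (\<forall>v w x. (\<lambda>y. D2 \<rho> y v w) differentiable (at x))
     \<and> (\<forall>v w u. continuous_on UNIV (\<lambda>x. D3 \<rho> x v w u))"

text \<open>Wirtinger derivative d rho / d xi_k = (d rho/d x_k - i d rho/d y_k)/2.\<close>
definition cpartial :: "(complex^'n \<Rightarrow> real) \<Rightarrow> complex^'n \<Rightarrow> 'n \<Rightarrow> complex" where
  "cpartial \<rho> \<xi> k = (complex_of_real (D1 \<rho> \<xi> (axis k 1)) - \<i> * complex_of_real (D1 \<rho> \<xi> (axis k \<i>))) / 2"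

text \<open>The pairing <d rho(xi), w> = sum_k d rho/d xi_k (xi) w_k (no conjugation).\<close>
definition dpair :: "(complex^'n \<Rightarrow> real) \<Rightarrow> complex^'n \<Rightarrow> complex^'n \<Rightarrow> complex" where
  "dpair \<rho> \<xi> w = (\<Sum>k\<in>UNIV. cpartial \<rho> \<xi> k * w $ k)"

text \<open>L(t) (depending on R): the open region of the disk |lambda| < R cut off by the chord
  {1 + e^{it} s : s real}, on the side of the bigger arc, i.e. on the same (strict) side of the
  chord line as the centre 0.  The signed side of lambda is Im (e^{-it} (lambda - 1)); the centre 0
  has side value Im(-e^{-it}) = sin t.\<close>
definition L_dom :: "real \<Rightarrow> real \<Rightarrow> complex set" where
  "L_dom R t = {w. cmod w < R \<and> Im (cnj (cis t) * (w - 1)) * sin t > 0}"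

end

theory Submission
  imports Defs
begin

lemma D1_deriv: assumes "C3 \<rho>" shows "(\<rho> has_derivative D1 \<rho> x) (at x)"
proof -
  have "\<rho> differentiable (at x)" using assms by (simp add: C3_def)
  hence "(\<rho> has_derivative frechet_derivative \<rho> (at x)) (at x)" by (rule frechet_derivative_works[THEN iffD1])
  moreover have "D1 \<rho> x = frechet_derivative \<rho> (at x)" by (rule ext) (simp add: D1_def)
  ultimately show ?thesis by simp
qed

lemma D1_linear: assumes "C3 \<rho>" shows "linear (D1 \<rho> x)"
  by (rule has_derivative_linear[OF D1_deriv[OF assms]])

lemma D2_deriv: assumes "C3 \<rho>" shows "((\<lambda>y. D1 \<rho> y v) has_derivative D2 \<rho> x v) (at x)"
proof -
  have "(\<lambda>y. D1 \<rho> y v) differentiable (at x)" using assms by (simp add: C3_def)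
  hence "((\<lambda>y. D1 \<rho> y v) has_derivative frechet_derivative (\<lambda>y. D1 \<rho> y v) (at x)) (at x)"
    by (rule frechet_derivative_works[THEN iffD1])
  moreover have "D2 \<rho> x v = frechet_derivative (\<lambda>y. D1 \<rho> y v) (at x)" by (rule ext) (simp add: D2_def)
  ultimately show ?thesis by simp
qed

lemma D2_linear: assumes "C3 \<rho>" shows "linear (D2 \<rho> x v)"
  by (rule has_derivative_linear[OF D2_deriv[OF assms]])

lemma lin_expand: assumes "linear f" shows "f v = (\<Sum>b\<in>Basis. (v \<bullet> b) * f b)"
proof -
  have "f v = f (\<Sum>b\<in>Basis. (v \<bullet> b) *\<^sub>R b)" by (simp add: euclidean_representation)
  also have "\<dots> = (\<Sum>b\<in>Basis. (v \<bullet> b) * f b)"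
    using assms by (simp add: linear_sum linear_scale)
  finally show ?thesis .
qed

lemma D1_expand: assumes "C3 \<rho>" shows "D1 \<rho> x v = (\<Sum>b\<in>Basis. (v \<bullet> b) * D1 \<rho> x b)"
  using lin_expand[OF D1_linear[OF assms]] .

lemma D2_expand1: assumes "C3 \<rho>" shows "D2 \<rho> x v w = (\<Sum>b\<in>Basis. (v \<bullet> b) * D2 \<rho> x b w)"
proof -
  have eq: "(\<lambda>y. D1 \<rho> y v) = (\<lambda>y. \<Sum>b\<in>Basis. (v \<bullet> b) * D1 \<rho> y b)"
    by (rule ext) (rule D1_expand[OF assms])
  have "((\<lambda>y. \<Sum>b\<in>Basis. (v \<bullet> b) * D1 \<rho> y b) has_derivative (\<lambda>w. \<Sum>b\<in>Basis. (v \<bullet> b) * D2 \<rho> x b w)) (at x)"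
    by (intro has_derivative_sum has_derivative_mult_right D2_deriv[OF assms])
  hence "((\<lambda>y. D1 \<rho> y v) has_derivative (\<lambda>w. \<Sum>b\<in>Basis. (v \<bullet> b) * D2 \<rho> x b w)) (at x)"
    by (simp add: eq)
  from has_derivative_unique[OF D2_deriv[OF assms] this] show ?thesis by (rule fun_cong)
qed

lemma D2_expand: assumes "C3 \<rho>"
  shows "D2 \<rho> x v w = (\<Sum>b\<in>Basis. \<Sum>c\<in>Basis. (v \<bullet> b) * (w \<bullet> c) * D2 \<rho> x b c)"
proof -
  have "D2 \<rho> x v w = (\<Sum>b\<in>Basis. (v \<bullet> b) * D2 \<rho> x b w)" by (rule D2_expand1[OF assms])
  also have "\<dots> = (\<Sum>b\<in>Basis. (v \<bullet> b) * (\<Sum>c\<in>Basis. (w \<bullet> c) * D2 \<rho> x b c))"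
    by (intro sum.cong refl arg_cong2[where f=times] lin_expand[OF D2_linear[OF assms]])
  also have "\<dots> = (\<Sum>b\<in>Basis. \<Sum>c\<in>Basis. (v \<bullet> b) * (w \<bullet> c) * D2 \<rho> x b c)"
    by (simp add: sum_distrib_left mult.assoc)
  finally show ?thesis .
qed

lemma D2_hom: assumes "C3 \<rho>" shows "D2 \<rho> x (c *\<^sub>R v) (c *\<^sub>R v) = c^2 * D2 \<rho> x v v"
proof -
  have "D2 \<rho> x (c *\<^sub>R v) (c *\<^sub>R v) = (\<Sum>b\<in>Basis. \<Sum>d\<in>Basis. c^2 * ((v \<bullet> b) * (v \<bullet> d) * D2 \<rho> x b d))"
    by (subst D2_expand[OF assms]) (intro sum.cong refl, simp add: power2_eq_square)
  also have "\<dots> = c^2 * D2 \<rho> x v v"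
    by (subst (2) D2_expand[OF assms]) (simp add: sum_distrib_left)
  finally show ?thesis .
qed

lemma rho_cont: assumes "C3 \<rho>" shows "continuous_on S \<rho>"
  by (intro continuous_at_imp_continuous_on ballI has_derivative_continuous[OF D1_deriv[OF assms]])

lemma D1_cont: assumes "C3 \<rho>" shows "continuous_on S (\<lambda>x. D1 \<rho> x v)"
  by (intro continuous_at_imp_continuous_on ballI has_derivative_continuous[OF D2_deriv[OF assms]])

lemma D2_cont: assumes "C3 \<rho>" shows "continuous_on S (\<lambda>x. D2 \<rho> x v w)"
proof -
  have "(\<lambda>y. D2 \<rho> y v w) differentiable (at x)" for x using assms by (simp add: C3_def)
  thus ?thesis by (intro continuous_at_imp_continuous_on ballI differentiable_imp_continuous_within)
qed

lemma D2_joint_cont: assumes "C3 \<rho>"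
  shows "continuous_on S (\<lambda>p. D2 \<rho> (fst p) (snd p) (snd p))"
proof -
  have c: "continuous_on S (\<lambda>p. D2 \<rho> (fst p) b c)" for b c
    by (rule continuous_on_compose2[OF D2_cont[OF assms, of UNIV] continuous_on_fst[OF continuous_on_id]]) auto
  have "continuous_on S (\<lambda>p. \<Sum>b\<in>Basis. \<Sum>c\<in>Basis. (snd p \<bullet> b) * (snd p \<bullet> c) * D2 \<rho> (fst p) b c)"
    by (intro continuous_on_sum continuous_on_mult c continuous_on_inner continuous_on_snd continuous_on_id continuous_on_const)
  thus ?thesis by (subst D2_expand[OF assms])
qed


lemma compact_margin:
  fixes K :: "'a::metric_space set"
  assumes K: "compact K" and cf: "continuous_on K (f::'a\<Rightarrow>real)" and cF: "continuous_on K F"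
    and nn: "\<forall>x\<in>K. f x \<ge> 0" and z: "\<forall>x\<in>K. f x = 0 \<longrightarrow> F x > (0::real)"
  shows "\<exists>\<eta>>0. \<forall>x\<in>K. f x < \<eta> \<longrightarrow> F x > 0"
proof -
  define C where "C = K \<inter> F -` {..0}"
  have "closed C" unfolding C_def
    by (rule continuous_closed_preimage[OF cF compact_imp_closed[OF K]]) simp
  hence cC: "compact C" using compact_Int_closed[OF K, of C] by (simp add: C_def Int_absorb1 Int_assoc)
  show ?thesis
  proof (cases "C = {}")
    case True
    have "F x > 0" if "x \<in> K" for x
    proof (rule ccontr)
      assume "\<not> F x > 0" hence "x \<in> C" using that by (auto simp: C_def)
      thus False using True by simp
    qed
    thus ?thesis by (intro exI[of _ 1]) auto
  next
    case False
    have "continuous_on C f" by (rule continuous_on_subset[OF cf]) (auto simp: C_def)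
    from continuous_attains_inf[OF cC False this] obtain x0 where x0: "x0 \<in> C" "\<forall>y\<in>C. f x0 \<le> f y" by blast
    have "f x0 > 0" using x0(1) nn z by (force simp: C_def)
    have "F x > 0" if "x \<in> K" "f x < f x0" for x
    proof (rule ccontr)
      assume "\<not> F x > 0" hence "x \<in> C" using that by (auto simp: C_def)
      thus False using x0(2) that by fastforce
    qed
    thus ?thesis using \<open>f x0 > 0\<close> by (intro exI[of _ "f x0"]) auto
  qed
qed

lemma compact_margin2:
  fixes K :: "'a::metric_space set"
  assumes K: "compact K" and cf: "continuous_on K (f::'a\<Rightarrow>real)" and cF: "continuous_on K F"
    and nn: "\<forall>x\<in>K. f x \<ge> 0" and z: "\<forall>x\<in>K. f x = 0 \<longrightarrow> F x > (0::real)"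
  shows "\<exists>\<eta>>0. \<exists>m>0. \<forall>x\<in>K. f x < \<eta> \<longrightarrow> F x \<ge> m"
proof -
  obtain \<eta> where \<eta>: "\<eta> > 0" "\<forall>x\<in>K. f x < \<eta> \<longrightarrow> F x > 0" using compact_margin[OF assms] by blast
  define C where "C = K \<inter> f -` {..\<eta>/2}"
  have "closed C" unfolding C_def
    by (rule continuous_closed_preimage[OF cf compact_imp_closed[OF K]]) simp
  hence cC: "compact C" using compact_Int_closed[OF K, of C] by (simp add: C_def Int_absorb1 Int_assoc)
  show ?thesis
  proof (cases "C = {}")
    case True
    have "F x \<ge> 1" if "x \<in> K" "f x < \<eta>/2" for x
    proof (rule ccontr)
      have "x \<in> C" using that by (auto simp: C_def)
      thus False using True by simp
    qed
    thus ?thesis using \<eta> by (intro exI[of _ "\<eta>/2"] conjI exI[of _ 1]) auto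
  next
    case False
    have "continuous_on C F" by (rule continuous_on_subset[OF cF]) (auto simp: C_def)
    from continuous_attains_inf[OF cC False this] obtain x0 where x0: "x0 \<in> C" "\<forall>y\<in>C. F x0 \<le> F y" by blast
    have "F x0 > 0" using x0(1) \<eta> by (auto simp: C_def)
    thus ?thesis using x0 \<eta> by (intro exI[of _ "\<eta>/2"] conjI exI[of _ "F x0"]) (auto simp: C_def)
  qed
qed

lemma line_deriv:
  assumes "(f has_derivative f') (at (\<xi> + s *\<^sub>R d))" "linear f'"
  shows "((\<lambda>s. f (\<xi> + s *\<^sub>R d)) has_real_derivative f' d) (at s)"
proof -
  have "((\<lambda>s. \<xi> + s *\<^sub>R d) has_derivative (\<lambda>t. t *\<^sub>R d)) (at s)"
    by (auto intro!: derivative_eq_intros)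
  from has_derivative_compose[OF this assms(1)]
  have "((\<lambda>s. f (\<xi> + s *\<^sub>R d)) has_derivative (\<lambda>t. f' (t *\<^sub>R d))) (at s)" .
  moreover have "(\<lambda>t. f' (t *\<^sub>R d)) = (*) (f' d)"
    using assms(2) by (auto simp: linear_scale)
  ultimately show ?thesis by (simp add: has_field_derivative_def)
qed

lemma g_deriv: assumes "C3 \<rho>"
  shows "((\<lambda>s. \<rho> (\<xi> + s *\<^sub>R d)) has_real_derivative D1 \<rho> (\<xi> + s *\<^sub>R d) d) (at s)"
  by (rule line_deriv[OF D1_deriv[OF assms] D1_linear[OF assms]])

lemma h_deriv: assumes "C3 \<rho>"
  shows "((\<lambda>s. D1 \<rho> (\<xi> + s *\<^sub>R d) d) has_real_derivative D2 \<rho> (\<xi> + s *\<^sub>R d) d d) (at s)"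
  by (rule line_deriv[OF D2_deriv[OF assms] D2_linear[OF assms]])

lemma zero_in_closure:
  assumes C: "C3 \<rho>" and z: "\<rho> x = 0" and nz: "D1 \<rho> x \<noteq> (\<lambda>_. 0)"
  shows "x \<in> closure {z. \<rho> z < 0}"
proof -
  obtain v0 where v0: "D1 \<rho> x v0 \<noteq> 0" using nz by auto
  define v where "v = (if D1 \<rho> x v0 < 0 then v0 else - v0)"
  have lin: "linear (D1 \<rho> x)" by (rule D1_linear[OF C])
  have v: "D1 \<rho> x v < 0" using v0 by (auto simp: v_def linear_neg[OF lin])
  have "((\<lambda>s. \<rho> (x + s *\<^sub>R v)) has_real_derivative D1 \<rho> (x + 0 *\<^sub>R v) v) (at 0)"
    by (rule g_deriv[OF C])
  hence "((\<lambda>s. \<rho> (x + s *\<^sub>R v)) has_real_derivative D1 \<rho> x v) (at 0)" by simp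
  from DERIV_neg_dec_right[OF this v] obtain d where d: "d > 0" "\<forall>h>0. h < d \<longrightarrow> \<rho> (x + h *\<^sub>R v) < \<rho> x"
    by auto
  show ?thesis unfolding closure_approachable
  proof (intro allI impI)
    fix e :: real assume e: "e > 0"
    define h where "h = min (d/2) (e / (2 * (norm v + 1)))"
    have "e / (2 * (norm v + 1)) > 0" using e by (intro divide_pos_pos) (auto intro: add_nonneg_pos)
    hence h: "h > 0" "h < d" using d e by (auto simp: h_def)
    have "h * norm v < e"
    proof -
      have "h * norm v \<le> (e / (2 * (norm v + 1))) * norm v"
        by (intro mult_right_mono) (auto simp: h_def)
      also have "\<dots> = e * (norm v / (2 * (norm v + 1)))" by simp
      also have "\<dots> < e * 1"
      proof (rule mult_strict_left_mono[OF _ e])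
        have "norm v < 2 * (norm v + 1)" by (smt (verit) norm_ge_zero)
        moreover have "0 < 2 * (norm v + 1)" by (smt (verit) norm_ge_zero)
        ultimately show "norm v / (2 * (norm v + 1)) < 1" by (subst divide_less_eq) simp
      qed
      also have "\<dots> = e" by simp
      finally show ?thesis .
    qed
    moreover have "\<rho> (x + h *\<^sub>R v) < 0" using d h z by auto
    ultimately show "\<exists>y\<in>{z. \<rho> z < 0}. dist y x < e" using h
      by (intro bexI[of _ "x + h *\<^sub>R v"]) (auto simp: dist_norm)
  qed
qed


lemma halfspace:
  assumes C: "C3 \<rho>" and conv: "convex {z. \<rho> z < 0}"
    and Kd: "\<forall>x q u. \<rho> q < 0 \<longrightarrow> dist x q < \<delta> \<longrightarrow> \<rho> x > -\<delta> \<longrightarrow> D2 \<rho> x u u \<ge> 0"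
    and dpos: "\<delta> > 0" and xi: "\<rho> \<xi> \<ge> 0" and q: "\<rho> q < 0" "dist \<xi> q < \<delta>" and z: "\<rho> z < 0"
  shows "D1 \<rho> \<xi> (z - \<xi>) < 0"
proof (rule ccontr)
  assume "\<not> D1 \<rho> \<xi> (z - \<xi>) < 0"
  hence h0: "D1 \<rho> \<xi> (z - \<xi>) \<ge> 0" by simp
  define d where "d = z - \<xi>"
  define g where "g s = \<rho> (\<xi> + s *\<^sub>R d)" for s
  define h where "h s = D1 \<rho> (\<xi> + s *\<^sub>R d) d" for s
  have gd: "(g has_real_derivative h s) (at s)" for s unfolding g_def h_def by (rule g_deriv[OF C])
  have hd: "(h has_real_derivative D2 \<rho> (\<xi> + s *\<^sub>R d) d d) (at s)" for s unfolding h_def by (rule h_deriv[OF C])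
  have g0: "g 0 = \<rho> \<xi>" and g1: "g 1 = \<rho> z" by (auto simp: g_def d_def)
  have h0': "h 0 \<ge> 0" using h0 by (simp add: h_def d_def)
  have seg: "\<exists>q'. \<rho> q' < 0 \<and> dist (\<xi> + s *\<^sub>R d) q' < \<delta>" if s: "0 \<le> s" "s \<le> 1" for s
  proof (intro exI conjI)
    have "(1 - s) *\<^sub>R q + s *\<^sub>R z \<in> {z. \<rho> z < 0}"
      using s q z by (intro convexD[OF conv]) auto
    thus "\<rho> (q + s *\<^sub>R (z - q)) < 0" by (simp add: algebra_simps)
    have "\<xi> + s *\<^sub>R d - (q + s *\<^sub>R (z - q)) = (1 - s) *\<^sub>R (\<xi> - q)"
      by (simp add: d_def algebra_simps)
    hence "dist (\<xi> + s *\<^sub>R d) (q + s *\<^sub>R (z - q)) = (1 - s) * dist \<xi> q"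
      using s by (simp add: dist_norm)
    also have "\<dots> \<le> dist \<xi> q" using s by (simp add: mult_left_le_one_le)
    finally show "dist (\<xi> + s *\<^sub>R d) (q + s *\<^sub>R (z - q)) < \<delta>" using q by linarith
  qed
  have mono: "g s1 \<ge> 0" if s1: "0 \<le> s1" "s1 \<le> 1" and above: "\<forall>s. 0 \<le> s \<and> s \<le> s1 \<longrightarrow> g s > -\<delta>" for s1
  proof -
    have hmono: "h s \<ge> h 0" if s: "0 \<le> s" "s \<le> s1" for s
    proof (rule DERIV_nonneg_imp_nondecreasing[OF s(1)])
      fix x assume x: "0 \<le> x" "x \<le> s"
      obtain q' where "\<rho> q' < 0" "dist (\<xi> + x *\<^sub>R d) q' < \<delta>" using seg[of x] x s s1 by auto
      moreover have "\<rho> (\<xi> + x *\<^sub>R d) > -\<delta>" using above x s unfolding g_def by auto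
      ultimately have "D2 \<rho> (\<xi> + x *\<^sub>R d) d d \<ge> 0" using Kd by blast
      thus "\<exists>y. (h has_real_derivative y) (at x) \<and> 0 \<le> y" using hd by blast
    qed
    have "g 0 \<le> g s1"
    proof (rule DERIV_nonneg_imp_nondecreasing[OF s1(1)])
      fix x assume x: "0 \<le> x" "x \<le> s1"
      thus "\<exists>y. (g has_real_derivative y) (at x) \<and> 0 \<le> y" using gd hmono[OF x] h0' by force
    qed
    thus ?thesis using g0 xi by simp
  qed
  define l where "l = max (g 1) (-\<delta>/2)"
  have l: "l < 0" "l > -\<delta>" "g 1 \<le> l" using g1 z dpos by (auto simp: l_def)
  define S where "S = {s\<in>{0..1}. g s \<le> l}"
  have gc: "continuous_on A g" for A
    using gd by (intro continuous_at_imp_continuous_on ballI) (auto intro: DERIV_isCont)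
  have "closed S" unfolding S_def
    using continuous_closed_preimage[OF gc closed_atLeastAtMost closed_atMost, of 0 1 l]
    by (simp add: vimage_def Int_def)
  moreover have "S \<noteq> {}" using l by (auto simp: S_def intro!: exI[of _ 1])
  moreover have bb: "bdd_below S" by (auto simp: S_def bdd_below_def)
  ultimately have s0S: "Inf S \<in> S" by (intro closed_contains_Inf)
  define s0 where "s0 = Inf S"
  have s0: "0 \<le> s0" "s0 \<le> 1" "g s0 \<le> l" using s0S by (auto simp: S_def s0_def)
  have below: "s0 \<le> s" if "s \<in> S" for s unfolding s0_def by (rule cInf_lower[OF that bb])
  have "g 0 \<ge> l" using g0 xi l by simp
  from IVT2'[OF s0(3) this s0(1) gc] obtain x where x: "0 \<le> x" "x \<le> s0" "g x = l" by auto
  hence "x \<in> S" using s0 by (auto simp: S_def)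
  hence "x = s0" using below x by force
  have above: "\<forall>s. 0 \<le> s \<and> s \<le> s0 \<longrightarrow> g s > -\<delta>"
  proof (intro allI impI)
    fix s assume s: "0 \<le> s \<and> s \<le> s0"
    show "g s > -\<delta>"
    proof (cases "s = s0")
      case True thus ?thesis using x \<open>x = s0\<close> l by simp
    next
      case False
      hence "s \<notin> S" using below s by force
      hence "g s > l" using s s0 by (auto simp: S_def)
      thus ?thesis using l by simp
    qed
  qed
  from mono[OF s0(1,2) above] show False using s0 l by simp
qed


lemma Ldom_expr:
  assumes a: "a \<noteq> 0"
  shows "Im (cnj (cis (pi/2 - Arg a)) * (dz / a - 1)) * sin (pi/2 - Arg a) = (Re a - Re dz) * Re a / (cmod a)^2"
proof -
  have r: "cmod a > 0" using a by simp
  have c1: "cos (pi/2 - Arg a) = Im a / cmod a" using a by (simp add: cos_diff sin_Arg)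
  have s1: "sin (pi/2 - Arg a) = Re a / cmod a" using a by (simp add: sin_diff cos_Arg)
  have cnjc: "cnj (cis (pi/2 - Arg a)) = - \<i> * a / complex_of_real (cmod a)"
    using r by (simp add: complex_eq_iff c1 s1 cis.sel)
  have "cnj (cis (pi/2 - Arg a)) * (dz / a - 1) = - \<i> * (dz - a) / complex_of_real (cmod a)"
    using a r unfolding cnjc by (simp add: field_simps)
  moreover have "Im (- \<i> * (dz - a) / complex_of_real (cmod a)) = (Re a - Re dz) / cmod a"
    by (simp add: Im_divide_of_real) (simp add: minus_divide_left)
  ultimately have "Im (cnj (cis (pi/2 - Arg a)) * (dz / a - 1)) = (Re a - Re dz) / cmod a"
    by simp
  thus ?thesis unfolding s1 by (simp add: power2_eq_square)
qed

lemma Re_dpair: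
  assumes C: "C3 \<rho>"
  shows "Re (dpair \<rho> \<xi> v) = D1 \<rho> \<xi> v / 2"
proof -
  have lin: "linear (D1 \<rho> \<xi>)" by (rule D1_linear[OF C])
  have ve: "v = (\<Sum>k\<in>UNIV. Re (v $ k) *\<^sub>R axis k 1 + Im (v $ k) *\<^sub>R axis k \<i>)"
  proof (subst vec_eq_iff, intro allI)
    fix j
    have "(\<Sum>k\<in>UNIV. Re (v $ k) *\<^sub>R axis k 1 + Im (v $ k) *\<^sub>R axis k \<i>) $ j
        = (\<Sum>k\<in>UNIV. Re (v $ k) *\<^sub>R (axis k 1 $ j) + Im (v $ k) *\<^sub>R (axis k \<i> $ j))"
      by (simp add: sum_component)
    also have "\<dots> = (\<Sum>k\<in>UNIV. (if k = j then Re (v $ j) *\<^sub>R 1 + Im (v $ j) *\<^sub>R \<i> else 0))"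
      by (intro sum.cong refl) (auto simp: axis_def)
    also have "\<dots> = Re (v $ j) *\<^sub>R 1 + Im (v $ j) *\<^sub>R \<i>" by simp
    also have "\<dots> = v $ j" by (simp add: complex_eq_iff)
    finally show "v $ j = (\<Sum>k\<in>UNIV. Re (v $ k) *\<^sub>R axis k 1 + Im (v $ k) *\<^sub>R axis k \<i>) $ j" by simp
  qed
  have "D1 \<rho> \<xi> v = (\<Sum>k\<in>UNIV. Re (v $ k) * D1 \<rho> \<xi> (axis k 1) + Im (v $ k) * D1 \<rho> \<xi> (axis k \<i>))"
    by (subst ve) (simp add: linear_sum[OF lin] linear_add[OF lin] linear_scale[OF lin])
  moreover have "Re (dpair \<rho> \<xi> v) = (\<Sum>k\<in>UNIV. Re (v $ k) * D1 \<rho> \<xi> (axis k 1) + Im (v $ k) * D1 \<rho> \<xi> (axis k \<i>)) / 2"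
    by (simp add: dpair_def cpartial_def Re_sum sum_divide_distrib algebra_simps)
  ultimately show ?thesis by simp
qed

definition Fabs :: "(complex^'n \<Rightarrow> real) \<Rightarrow> complex^'n \<Rightarrow> real" where
  "Fabs \<rho> x = (\<Sum>b\<in>Basis. \<bar>D1 \<rho> x b\<bar>)"

lemma Fabs_cont: assumes "C3 \<rho>" shows "continuous_on S (Fabs \<rho>)"
  unfolding Fabs_def by (intro continuous_on_sum continuous_intros D1_cont[OF assms])

lemma D1_le_Fabs: "b \<in> Basis \<Longrightarrow> \<bar>D1 \<rho> x b\<bar> \<le> Fabs \<rho> x"
  unfolding Fabs_def by (rule member_le_sum) auto

lemma axis_Basis: "axis k 1 \<in> (Basis :: (complex^'n) set)" "axis k \<i> \<in> (Basis :: (complex^'n) set)"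
  by (auto simp: Basis_vec_def Basis_complex_def)

lemma cmod_dpair:
  "cmod (dpair \<rho> \<xi> z) \<le> CARD('n) * Fabs \<rho> \<xi> * norm z" for z :: "complex^'n"
proof -
  have cp: "cmod (cpartial \<rho> \<xi> k) \<le> Fabs \<rho> \<xi>" for k
  proof -
    have "cmod (cpartial \<rho> \<xi> k) \<le> (\<bar>D1 \<rho> \<xi> (axis k 1)\<bar> + \<bar>D1 \<rho> \<xi> (axis k \<i>)\<bar>) / 2"
      unfolding cpartial_def using norm_triangle_ineq4[of "complex_of_real (D1 \<rho> \<xi> (axis k 1))" "\<i> * complex_of_real (D1 \<rho> \<xi> (axis k \<i>))"]
      by (simp add: norm_mult norm_divide)
    also have "\<dots> \<le> Fabs \<rho> \<xi>"
    proof -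
      have gen: "\<And>a b F::real. a \<le> F \<Longrightarrow> b \<le> F \<Longrightarrow> (a+b)/2 \<le> F" by (simp add: field_simps)
      show ?thesis by (rule gen[OF D1_le_Fabs[OF axis_Basis(1)] D1_le_Fabs[OF axis_Basis(2)]])
    qed
    finally show ?thesis .
  qed
  have "cmod (dpair \<rho> \<xi> z) \<le> (\<Sum>k\<in>UNIV. cmod (cpartial \<rho> \<xi> k * z $ k))"
    unfolding dpair_def by (rule norm_sum)
  also have "\<dots> \<le> (\<Sum>k\<in>(UNIV::'n set). Fabs \<rho> \<xi> * norm z)"
  proof (intro sum_mono)
    fix k
    have "0 \<le> Fabs \<rho> \<xi>" unfolding Fabs_def by (intro sum_nonneg) auto
    thus "cmod (cpartial \<rho> \<xi> k * z $ k) \<le> Fabs \<rho> \<xi> * norm z"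
      unfolding norm_mult using Finite_Cartesian_Product.norm_nth_le[where x=z] by (intro mult_mono cp) auto
  qed
  also have "\<dots> = CARD('n) * Fabs \<rho> \<xi> * norm z" by simp
  finally show ?thesis .
qed

lemma D1_lower:
  fixes \<xi> :: "complex^'n"
  assumes C: "C3 \<rho>" and r: "r > 0" and H: "\<forall>z. norm z < r \<longrightarrow> D1 \<rho> \<xi> (z - \<xi>) < 0"
  shows "D1 \<rho> \<xi> \<xi> \<ge> r / 2 * Fabs \<rho> \<xi> / DIM(complex^'n)"
proof -
  have lin: "linear (D1 \<rho> \<xi>)" by (rule D1_linear[OF C])
  have each: "D1 \<rho> \<xi> \<xi> \<ge> r / 2 * \<bar>D1 \<rho> \<xi> b\<bar>" if b: "b \<in> (Basis :: (complex^'n) set)" for b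
  proof -
    have nb: "norm b = 1" using b by simp
    have "norm ((r/2) *\<^sub>R b) < r" "norm (- (r/2) *\<^sub>R b) < r" using r nb by auto
    hence "D1 \<rho> \<xi> ((r/2) *\<^sub>R b - \<xi>) < 0" "D1 \<rho> \<xi> (- (r/2) *\<^sub>R b - \<xi>) < 0" using H by blast+
    hence "r/2 * D1 \<rho> \<xi> b < D1 \<rho> \<xi> \<xi>" "- (r/2) * D1 \<rho> \<xi> b < D1 \<rho> \<xi> \<xi>"
      by (simp_all add: linear_diff[OF lin] linear_scale[OF lin] linear_neg[OF lin])
    thus ?thesis by (simp add: abs_if)
  qed
  have "r / 2 * Fabs \<rho> \<xi> = (\<Sum>b\<in>Basis. r / 2 * \<bar>D1 \<rho> \<xi> b\<bar>)" by (simp add: Fabs_def sum_distrib_left)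
  also have "\<dots> \<le> (\<Sum>b\<in>(Basis :: (complex^'n) set). D1 \<rho> \<xi> \<xi>)" by (intro sum_mono each)
  also have "\<dots> = DIM(complex^'n) * D1 \<rho> \<xi> \<xi>" by simp
  finally have "r / 2 * Fabs \<rho> \<xi> \<le> DIM(complex^'n) * D1 \<rho> \<xi> \<xi>" .
  moreover have "real DIM(complex^'n) > 0" by simp
  ultimately show ?thesis by (simp add: pos_divide_le_eq mult_ac)
qed


theorem lemma2:
  fixes \<rho> :: "complex^'n \<Rightarrow> real"
  assumes C3: "C3 \<rho>"
    and bounded: "bounded {z. \<rho> z < 0}"
    and convex: "convex {z. \<rho> z < 0}"
    and zero_in: "\<rho> 0 < 0"
    and defining: "\<forall>x. \<rho> x = 0 \<longrightarrow> D1 \<rho> x \<noteq> (\<lambda>_. 0)"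
    and strongly_convex: "\<forall>x. \<rho> x = 0 \<longrightarrow> (\<forall>v. v \<noteq> 0 \<longrightarrow> D2 \<rho> x v v > 0)"
    and sublevel: "\<exists>c>0. compact {z. \<rho> z \<le> c}"
  shows "\<exists>\<epsilon>0>0. \<forall>\<epsilon>. 0 < \<epsilon> \<and> \<epsilon> < \<epsilon>0 \<longrightarrow>
           (\<exists>R>1. \<forall>\<xi> z. 0 \<le> \<rho> \<xi> \<and> \<rho> \<xi> < \<epsilon> \<and> \<rho> z < 0 \<longrightarrow>
              dpair \<rho> \<xi> z / dpair \<rho> \<xi> \<xi> \<in> L_dom R (pi / 2 - Arg (dpair \<rho> \<xi> \<xi>)))"
proof -
  define \<Omega> where "\<Omega> = {z. \<rho> z < 0}"
  have rc: "continuous_on S \<rho>" for S by (rule rho_cont[OF C3])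
  obtain c where c: "c > 0" "compact {z. \<rho> z \<le> c}" using sublevel by blast
  obtain B where B: "B > 0" "\<forall>z\<in>\<Omega>. norm z \<le> B" using bounded unfolding \<Omega>_def bounded_pos by blast
  have "open \<Omega>" unfolding \<Omega>_def by (rule open_Collect_less[OF rc continuous_on_const])
  moreover have "0 \<in> \<Omega>" using zero_in by (simp add: \<Omega>_def)
  ultimately obtain r where r: "r > 0" "ball 0 r \<subseteq> \<Omega>" using open_contains_ball by blast
  have One: "\<Omega> \<noteq> {}" using \<open>0 \<in> \<Omega>\<close> by blast
  have clos: "x \<in> closure \<Omega> \<Longrightarrow> \<rho> x \<le> 0" for x
  proof -
    have "closure \<Omega> \<subseteq> {z. \<rho> z \<le> 0}"
      by (rule closure_minimal) (auto simp: \<Omega>_def intro: closed_Collect_le[OF rc continuous_on_const])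
    thus "x \<in> closure \<Omega> \<Longrightarrow> \<rho> x \<le> 0" by blast
  qed
  define K1 where "K1 = cball (0::complex^'n) (B+1) \<times> sphere (0::complex^'n) 1"
  define f1 where "f1 p = infdist (fst p) \<Omega> + max 0 (- \<rho> (fst p))" for p :: "(complex^'n) \<times> (complex^'n)"
  define F1 where "F1 p = D2 \<rho> (fst p) (snd p) (snd p)" for p :: "(complex^'n) \<times> (complex^'n)"
  have "\<exists>\<eta>>0. \<forall>p\<in>K1. f1 p < \<eta> \<longrightarrow> F1 p > 0"
  proof (rule compact_margin)
    show "compact K1" unfolding K1_def by (intro compact_Times compact_cball compact_sphere)
    show "continuous_on K1 f1" unfolding f1_def
      by (intro continuous_intros continuous_on_infdist continuous_on_compose2[OF rc[of UNIV] continuous_on_fst]) auto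
    show "continuous_on K1 F1" unfolding F1_def by (rule D2_joint_cont[OF C3])
    show "\<forall>p\<in>K1. f1 p \<ge> 0" by (auto simp: f1_def intro: add_nonneg_nonneg infdist_nonneg)
    show "\<forall>p\<in>K1. f1 p = 0 \<longrightarrow> F1 p > 0"
    proof (intro ballI impI)
      fix p assume p: "p \<in> K1" "f1 p = 0"
      have "infdist (fst p) \<Omega> = 0" "\<rho> (fst p) \<ge> 0"
        using p(2) infdist_nonneg[of "fst p" \<Omega>] unfolding f1_def by (smt (verit))+
      hence "\<rho> (fst p) = 0" using clos in_closure_iff_infdist_zero[OF One] by force
      moreover have "snd p \<noteq> 0" using p(1) by (auto simp: K1_def)
      ultimately show "F1 p > 0" using strongly_convex by (simp add: F1_def)
    qed
  qed
  then obtain \<eta> where \<eta>: "\<eta> > 0" "\<forall>p\<in>K1. f1 p < \<eta> \<longrightarrow> F1 p > 0" by blast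
  define \<delta> where "\<delta> = min (\<eta>/2) 1"
  have dpos: "\<delta> > 0" using \<eta> by (simp add: \<delta>_def)
  have Kd: "\<forall>x q u. \<rho> q < 0 \<longrightarrow> dist x q < \<delta> \<longrightarrow> \<rho> x > -\<delta> \<longrightarrow> D2 \<rho> x u u \<ge> 0"
  proof (intro allI impI)
    fix x q u assume q: "\<rho> q < 0" and xq: "dist x q < \<delta>" and rx: "\<rho> x > -\<delta>"
    show "D2 \<rho> x u u \<ge> 0"
    proof (cases "u = 0")
      case True
      thus ?thesis using D2_hom[OF C3, of x 0 u] by simp
    next
      case False
      define u' where "u' = u /\<^sub>R norm u"
      have "norm x \<le> norm q + dist x q" by (metis dist_commute dist_norm norm_triangle_sub add.commute)
      moreover have "norm q \<le> B" using B q by (auto simp: \<Omega>_def)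
      ultimately have "norm x \<le> B + 1" using xq by (simp add: \<delta>_def)
      hence pK: "(x, u') \<in> K1" using False by (auto simp: K1_def u'_def)
      have "infdist x \<Omega> \<le> dist x q" using q by (intro infdist_le) (simp add: \<Omega>_def)
      moreover have "max 0 (- \<rho> x) < \<eta>/2"
      proof -
        have "- \<rho> x < \<eta>/2" using rx min.cobounded1[of "\<eta>/2" 1] unfolding \<delta>_def by linarith
        thus ?thesis using \<eta>(1) by simp
      qed
      moreover have "dist x q < \<eta>/2" using xq unfolding \<delta>_def by simp
      ultimately have "f1 (x, u') < \<eta>" unfolding f1_def by simp
      hence pos: "D2 \<rho> x u' u' > 0" using \<eta>(2) pK by (auto simp: F1_def)
      have "u = norm u *\<^sub>R u'" using False by (simp add: u'_def)
      hence "D2 \<rho> x u u = (norm u)^2 * D2 \<rho> x u' u'" using D2_hom[OF C3, of x "norm u" u'] by simp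
      thus ?thesis using pos by simp
    qed
  qed
  have half: "D1 \<rho> \<xi> (z - \<xi>) < 0" if "\<rho> \<xi> \<ge> 0" "\<rho> q < 0" "dist \<xi> q < \<delta>" "\<rho> z < 0" for \<xi> q z
    by (rule halfspace[OF C3 convex Kd dpos that])
  define K0 where "K0 = {x. \<rho> x \<le> c} \<inter> {x. 0 \<le> \<rho> x}"
  have cK0: "compact K0" unfolding K0_def
    by (intro compact_Int_closed c closed_Collect_le rc continuous_on_const)
  have z0: "\<rho> x = 0 \<Longrightarrow> x \<in> closure \<Omega>" for x
    unfolding \<Omega>_def using zero_in_closure[OF C3] defining by blast
  have "\<exists>\<eta>>0. \<forall>x\<in>K0. \<rho> x < \<eta> \<longrightarrow> \<delta> - infdist x \<Omega> > 0"
  proof (rule compact_margin[OF cK0 rc])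
    show "continuous_on K0 (\<lambda>x. \<delta> - infdist x \<Omega>)" by (intro continuous_intros)
    show "\<forall>x\<in>K0. 0 \<le> \<rho> x" by (auto simp: K0_def)
    show "\<forall>x\<in>K0. \<rho> x = 0 \<longrightarrow> 0 < \<delta> - infdist x \<Omega>"
      using z0 in_closure_iff_infdist_zero[OF One] dpos by auto
  qed
  then obtain \<eta>1 where \<eta>1: "\<eta>1 > 0" "\<forall>x\<in>K0. \<rho> x < \<eta>1 \<longrightarrow> infdist x \<Omega> < \<delta>" by auto
  have "\<exists>\<eta>>0. \<exists>m>0. \<forall>x\<in>K0. \<rho> x < \<eta> \<longrightarrow> Fabs \<rho> x \<ge> m"
  proof (rule compact_margin2[OF cK0 rc Fabs_cont[OF C3]])
    show "\<forall>x\<in>K0. 0 \<le> \<rho> x" by (auto simp: K0_def)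
    show "\<forall>x\<in>K0. \<rho> x = 0 \<longrightarrow> 0 < Fabs \<rho> x"
    proof (intro ballI impI)
      fix x assume "x \<in> K0" "\<rho> x = 0"
      hence nz: "D1 \<rho> x \<noteq> (\<lambda>_. 0)" using defining by blast
      show "0 < Fabs \<rho> x"
      proof (rule ccontr)
        assume "\<not> 0 < Fabs \<rho> x"
        moreover have "0 \<le> Fabs \<rho> x" unfolding Fabs_def by (intro sum_nonneg) auto
        ultimately have "Fabs \<rho> x = 0" by simp
        hence "\<forall>b\<in>Basis. D1 \<rho> x b = 0" unfolding Fabs_def
          using sum_nonneg_eq_0_iff[of "Basis :: (complex^'n) set" "\<lambda>b. \<bar>D1 \<rho> x b\<bar>"] by auto
        hence "D1 \<rho> x v = 0" for v by (subst D1_expand[OF C3]) simp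
        thus False using nz by auto
      qed
    qed
  qed
  then obtain \<eta>2 m where \<eta>2: "\<eta>2 > 0" "m > 0" "\<forall>x\<in>K0. \<rho> x < \<eta>2 \<longrightarrow> Fabs \<rho> x \<ge> m" by auto
  have "(0::complex^'n) \<in> {z. \<rho> z \<le> c}" using zero_in c by simp
  hence "{z. \<rho> z \<le> c} \<noteq> {}" by blast
  from continuous_attains_sup[OF c(2) this Fabs_cont[OF C3]]
  obtain x1 where x1: "\<forall>y\<in>{z. \<rho> z \<le> c}. Fabs \<rho> y \<le> Fabs \<rho> x1" by blast
  define M where "M = Fabs \<rho> x1"
  have M0: "M \<ge> 0" unfolding M_def Fabs_def by (intro sum_nonneg) auto
  define \<alpha> where "\<alpha> = r * m / (4 * DIM(complex^'n))"
  have \<alpha>: "\<alpha> > 0" using r \<eta>2 by (simp add: \<alpha>_def)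
  define R where "R = max 2 (CARD('n) * M * B / \<alpha> + 1)"
  show ?thesis
  proof (rule exI[of _ "min c (min \<eta>1 \<eta>2)"], intro conjI allI impI)
    show "min c (min \<eta>1 \<eta>2) > 0" using c \<eta>1 \<eta>2 by simp
    fix \<epsilon> assume \<epsilon>: "0 < \<epsilon> \<and> \<epsilon> < min c (min \<eta>1 \<eta>2)"
    show "\<exists>R>1. \<forall>\<xi> z. 0 \<le> \<rho> \<xi> \<and> \<rho> \<xi> < \<epsilon> \<and> \<rho> z < 0 \<longrightarrow>
              dpair \<rho> \<xi> z / dpair \<rho> \<xi> \<xi> \<in> L_dom R (pi / 2 - Arg (dpair \<rho> \<xi> \<xi>))"
    proof (rule exI[of _ R], intro conjI allI impI)
      show "R > 1" by (simp add: R_def)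
      fix \<xi> z assume A: "0 \<le> \<rho> \<xi> \<and> \<rho> \<xi> < \<epsilon> \<and> \<rho> z < 0"
      have xK0: "\<xi> \<in> K0" using A \<epsilon> by (auto simp: K0_def)
      have "infdist \<xi> \<Omega> < \<delta>" using \<eta>1 xK0 A \<epsilon> by auto
      then obtain q where q: "q \<in> \<Omega>" "dist \<xi> q < \<delta>"
        unfolding infdist_notempty[OF One]
        by (subst (asm) cINF_less_iff[OF One]) (auto intro: bdd_belowI[of _ 0])
      have H: "\<forall>z. \<rho> z < 0 \<longrightarrow> D1 \<rho> \<xi> (z - \<xi>) < 0"
        using half A q by (auto simp: \<Omega>_def)
      have Hb: "\<forall>z. norm z < r \<longrightarrow> D1 \<rho> \<xi> (z - \<xi>) < 0"
        using H r(2) by (auto simp: \<Omega>_def subset_iff)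
      have low: "D1 \<rho> \<xi> \<xi> \<ge> r / 2 * Fabs \<rho> \<xi> / DIM(complex^'n)" by (rule D1_lower[OF C3 r(1) Hb])
      have Fm: "Fabs \<rho> \<xi> \<ge> m" using \<eta>2 xK0 A \<epsilon> by auto
      have "r / 2 * m / DIM(complex^'n) \<le> r / 2 * Fabs \<rho> \<xi> / DIM(complex^'n)"
        using Fm r by (intro divide_right_mono mult_left_mono) auto
      hence "D1 \<rho> \<xi> \<xi> \<ge> r / 2 * m / DIM(complex^'n)" using low by linarith
      hence D1low: "D1 \<rho> \<xi> \<xi> \<ge> 2 * \<alpha>" by (simp add: \<alpha>_def mult.commute)
      define a where "a = dpair \<rho> \<xi> \<xi>"
      define dz where "dz = dpair \<rho> \<xi> z"
      have Rea: "Re a = D1 \<rho> \<xi> \<xi> / 2" unfolding a_def by (rule Re_dpair[OF C3])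
      have Redz: "Re dz = D1 \<rho> \<xi> z / 2" unfolding dz_def by (rule Re_dpair[OF C3])
      have Ra: "Re a \<ge> \<alpha>" using Rea D1low by simp
      hence anz: "a \<noteq> 0" using \<alpha> by auto
      have cma: "cmod a \<ge> \<alpha>" using Ra complex_Re_le_cmod[of a] by linarith
      have "cmod dz \<le> CARD('n) * Fabs \<rho> \<xi> * norm z" unfolding dz_def by (rule cmod_dpair)
      also have "\<dots> \<le> CARD('n) * M * B"
      proof (intro mult_mono)
        show "Fabs \<rho> \<xi> \<le> M" using x1 A \<epsilon> by (auto simp: M_def)
        show "norm z \<le> B" using B A by (auto simp: \<Omega>_def)
      qed (use M0 in \<open>auto simp: Fabs_def intro: sum_nonneg\<close>)
      finally have cdz: "cmod dz \<le> CARD('n) * M * B" .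
      have "cmod (dz / a) = cmod dz / cmod a" by (simp add: norm_divide)
      also have "\<dots> \<le> CARD('n) * M * B / cmod a" using anz by (intro divide_right_mono cdz) auto
      also have "\<dots> \<le> CARD('n) * M * B / \<alpha>"
      proof (rule divide_left_mono[OF cma])
        show "0 \<le> CARD('n) * M * B" using M0 B by simp
        show "0 < cmod a * \<alpha>" using cma \<alpha> by (intro mult_pos_pos) auto
      qed
      also have "\<dots> < R" by (simp add: R_def)
      finally have norm_ok: "cmod (dz / a) < R" .
      have lin: "linear (D1 \<rho> \<xi>)" by (rule D1_linear[OF C3])
      have "D1 \<rho> \<xi> (z - \<xi>) = D1 \<rho> \<xi> z - D1 \<rho> \<xi> \<xi>" by (rule linear_diff[OF lin])
      hence "Re a - Re dz > 0" using H A Rea Redz by auto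
      moreover have "Re a > 0" using Ra \<alpha> by simp
      moreover have "(cmod a)^2 > 0" using anz by simp
      ultimately have "(Re a - Re dz) * Re a / (cmod a)^2 > 0" by simp
      hence "Im (cnj (cis (pi/2 - Arg a)) * (dz / a - 1)) * sin (pi/2 - Arg a) > 0"
        using Ldom_expr[OF anz, of dz] by simp
      thus "dpair \<rho> \<xi> z / dpair \<rho> \<xi> \<xi> \<in> L_dom R (pi / 2 - Arg (dpair \<rho> \<xi> \<xi>))"
        using norm_ok by (simp add: L_dom_def a_def dz_def)
    qed
  qed
qed

end
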